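(* Consider the two-layer multi-item order fulfillment problem described in the context with a single FDC ($K=1$), fixed costs $f_0\ge f_1\ge 0$, and variable costs satisfying $a\le c_{k,t}^i\le b$ for constants $b>a>0$. For parameters $\eta\ge1$, $\theta\ge0$, let \textsc{Order-Size AdjV-Priority} be the following policy. In each period $t$, for each item $i$, set $\hat m_{1,t}^i=\min\{S_t^i,I_{1,t-1}^i\}$ if $c_{1,t}^i<c_{0,t}^i/\eta$ and $\hat m_{1,t}^i=0$ otherwise, and $\hat m_{0,t}^i=S_t^i-\hat m_{1,t}^i$. If $\sum_{i=1}^nS_t^i\le\theta$ and $I_{1,t-1}^i\ge S_t^i$ for all $i\in[n]$, fulfill the whole order from the FDC ($m_{1,t}^i=S_t^i$, $m_{0,t}^i=0$); otherwise set $m_{k,t}^i=\hat m_{k,t}^i$. If $\eta=\sqrt{\max\{f_0/2,\,b\}/a}$ and $\theta=\frac{f_0}{2a\eta}$, then \[\mathfrak R(\textsc{Order-Size AdjV-Priority})\le(4+\sqrt2)\sqrt{\frac{\max\{f_0/2,\ b\}}{a}}.\]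
   Context: Problem with one FDC (index $1$) and one RDC (index $0$, unlimited inventory). The FDC initially holds $I_{1,0}^i\ge0$ units of item $i\in[n]$, never replenished. In periods $t=1,\dots,T$ an order $\boldsymbol S_t=(S_t^i)_i$ of nonnegative integers arrives; after observing it and the variable costs $c_{k,t}^i$, the policy must immediately and irrevocably choose $m_{0,t}^i,m_{1,t}^i\ge0$ with $m_{0,t}^i+m_{1,t}^i=S_t^i$ and $m_{1,t}^i\le I_{1,t-1}^i$, where $I_{1,t}^i=I_{1,0}^i-\sum_{\tau\le t}m_{1,\tau}^i$. Period cost $\sum_{k=0,1}[f_k\mathbb{I}(\sum_im_{k,t}^i>0)+\sum_ic_{k,t}^im_{k,t}^i]$; total cost is the sum over periods. Online policies decide in period $t$ using only fixed costs, initial inventories and orders/variable costs up to $t$ (and the known constants $a,b$). $\mathrm{ALG}(I)$: (expected) total cost; $\mathrm{OPT}(I)$: offline optimal total cost. $\mathfrak R(\mathrm{ALG})$ is the supremum of $\mathrm{ALG}(I)/\mathrm{OPT}(I)$ over all $n,T$, initial inventories, variable costs in $[a,b]$ and order sequences. *)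

theory Defs
  imports Complex_Main
begin

text \<open>Items are indexed by i < n, periods by t in {1..T},
  warehouses by k in {0,1} (0 = RDC, 1 = FDC).
  I0 i   : initial FDC inventory of item i,
  S t i  : order quantity of item i in period t,
  c k t i: variable cost of shipping one unit of item i from k in period t.\<close>

definition fixed_cost :: "real \<Rightarrow> real \<Rightarrow> nat \<Rightarrow> real" where
  "fixed_cost f0 f1 k = (if k = 0 then f0 else f1)"

definition plan_cost ::
  "real \<Rightarrow> real \<Rightarrow> nat \<Rightarrow> nat \<Rightarrow> (nat \<Rightarrow> nat \<Rightarrow> nat \<Rightarrow> real)
   \<Rightarrow> (nat \<Rightarrow> nat \<Rightarrow> nat \<Rightarrow> nat) \<Rightarrow> real" where
  "plan_cost f0 f1 n T c m =
     (\<Sum>t\<in>{1..T}. \<Sum>k\<in>{0::nat,1}.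
        fixed_cost f0 f1 k * (if (\<Sum>i<n. m k t i) > 0 then 1 else 0)
        + (\<Sum>i<n. c k t i * real (m k t i)))"

text \<open>Feasibility: orders fully served, FDC shipments bounded by remaining FDC inventory
  I_{1,t-1}^i = I0 i - sum_{tau<t} m 1 tau i.\<close>
definition feasible ::
  "nat \<Rightarrow> nat \<Rightarrow> (nat \<Rightarrow> nat) \<Rightarrow> (nat \<Rightarrow> nat \<Rightarrow> nat) \<Rightarrow> (nat \<Rightarrow> nat \<Rightarrow> nat \<Rightarrow> nat) \<Rightarrow> bool" where
  "feasible n T I0 S m \<longleftrightarrow>
     (\<forall>t\<in>{1..T}. \<forall>i<n.
        m 0 t i + m 1 t i = S t i \<and>
        (\<Sum>\<tau>\<in>{1..t}. m 1 \<tau> i) \<le> I0 i)"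

definition opt_cost ::
  "real \<Rightarrow> real \<Rightarrow> nat \<Rightarrow> nat \<Rightarrow> (nat \<Rightarrow> nat) \<Rightarrow> (nat \<Rightarrow> nat \<Rightarrow> nat)
   \<Rightarrow> (nat \<Rightarrow> nat \<Rightarrow> nat \<Rightarrow> real) \<Rightarrow> real" where
  "opt_cost f0 f1 n T I0 S c = Inf {plan_cost f0 f1 n T c m | m. feasible n T I0 S m}"

text \<open>Order-Size AdjV-Priority. cur i is the current FDC inventory I_{1,t-1}^i.\<close>
definition hat_m1 ::
  "real \<Rightarrow> (nat \<Rightarrow> nat \<Rightarrow> nat) \<Rightarrow> (nat \<Rightarrow> nat \<Rightarrow> nat \<Rightarrow> real) \<Rightarrow> (nat \<Rightarrow> nat) \<Rightarrow> nat \<Rightarrow> nat \<Rightarrow> nat" where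
  "hat_m1 eta S c cur t i = (if c 1 t i < c 0 t i / eta then min (S t i) (cur i) else 0)"

definition osa_m1 ::
  "real \<Rightarrow> real \<Rightarrow> nat \<Rightarrow> (nat \<Rightarrow> nat \<Rightarrow> nat) \<Rightarrow> (nat \<Rightarrow> nat \<Rightarrow> nat \<Rightarrow> real) \<Rightarrow> (nat \<Rightarrow> nat) \<Rightarrow> nat \<Rightarrow> nat \<Rightarrow> nat" where
  "osa_m1 eta theta n S c cur t i =
     (if real (\<Sum>j<n. S t j) \<le> theta \<and> (\<forall>j<n. S t j \<le> cur j) then S t i
      else hat_m1 eta S c cur t i)"

text \<open>osa_inv ... t = FDC inventory after period t under the policy.\<close>
fun osa_inv ::
  "real \<Rightarrow> real \<Rightarrow> nat \<Rightarrow> (nat \<Rightarrow> nat) \<Rightarrow> (nat \<Rightarrow> nat \<Rightarrow> nat) \<Rightarrow> (nat \<Rightarrow> nat \<Rightarrow> nat \<Rightarrow> real) \<Rightarrow> nat \<Rightarrow> nat \<Rightarrow> nat" where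
  "osa_inv eta theta n I0 S c 0 = I0"
| "osa_inv eta theta n I0 S c (Suc t) =
     (\<lambda>i. osa_inv eta theta n I0 S c t i - osa_m1 eta theta n S c (osa_inv eta theta n I0 S c t) (Suc t) i)"

definition osa_plan ::
  "real \<Rightarrow> real \<Rightarrow> nat \<Rightarrow> (nat \<Rightarrow> nat) \<Rightarrow> (nat \<Rightarrow> nat \<Rightarrow> nat) \<Rightarrow> (nat \<Rightarrow> nat \<Rightarrow> nat \<Rightarrow> real) \<Rightarrow> nat \<Rightarrow> nat \<Rightarrow> nat \<Rightarrow> nat" where
  "osa_plan eta theta n I0 S c k t i =
     (let m1 = osa_m1 eta theta n S c (osa_inv eta theta n I0 S c (t - 1)) t i
      in if k = 0 then S t i - m1 else m1)"

definition osa_cost ::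
  "real \<Rightarrow> real \<Rightarrow> real \<Rightarrow> real \<Rightarrow> nat \<Rightarrow> nat \<Rightarrow> (nat \<Rightarrow> nat) \<Rightarrow> (nat \<Rightarrow> nat \<Rightarrow> nat)
   \<Rightarrow> (nat \<Rightarrow> nat \<Rightarrow> nat \<Rightarrow> real) \<Rightarrow> real" where
  "osa_cost eta theta f0 f1 n T I0 S c = plan_cost f0 f1 n T c (osa_plan eta theta n I0 S c)"

end

theory Submission
  imports Defs
begin


lemma rdiff: "real (p - q) = max (real p - real q) 0"
  by (cases "q \<le> p") (auto simp: of_nat_diff)

lemma le_mult_self: "0 \<le> z \<Longrightarrow> 1 \<le> k \<Longrightarrow> z \<le> k * (z::real)"
  using mult_right_mono[of 1 k z] by simp

lemma item_bound:
  fixes a b f0 eta c0 c1 :: real and s cur x h :: nat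
  assumes "0 < a" "a \<le> b" "0 \<le> f0" "1 \<le> eta" "b \<le> eta^2 * a" "f0 \<le> 2*eta^2*a"
    and "a \<le> c0" "c0 \<le> b" "a \<le> c1" "c1 \<le> b" "x \<le> s"
    and h: "h = (if c1 < c0/eta then min s cur else 0)"
  shows "c0 * real (s - h) + c1 * real h + (b - a + f0) * real (h - x)
         \<le> 3*eta*(c0*real(s - x) + c1*real x) + (b - a)*real(x - cur)"
proof (cases "c1 < c0/eta")
  case True
  have e0: "eta > 0" using assms by simp
  have ec: "eta*c1 < c0" using True e0 by (simp add: field_simps)
  have k1: "3*eta^2*c1 \<le> 3*eta*c0"
  proof -
    have "eta*(eta*c1) \<le> eta*c0" using ec e0 by (intro mult_left_mono) auto
    then show ?thesis by (simp add: power2_eq_square algebra_simps)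
  qed
  have k2: "eta^2*(c1 - a) \<ge> 1*(c1 - a)"
    using assms by (intro mult_right_mono) (auto simp: power2_eq_square intro: order_trans[of _ eta] mult_mono)
  have key: "b - a + f0 + c1 \<le> 3*eta*c0"
    using assms k1 k2 by (simp add: algebra_simps)
  have xs: "real x \<le> real s" using assms by simp
  show ?thesis
  proof (cases "s \<le> cur")
    case True
    then have hs: "h = s" using h \<open>c1 < c0/eta\<close> by simp
    have m: "(b - a + f0 + c1) * real (s - x) \<le> 3*eta*c0 * real (s-x)"
      by (rule mult_right_mono[OF key]) simp
    have m2: "c1 * real x \<le> (3*eta) * (c1 * real x)"
      using assms by (intro le_mult_self) auto
    have xc: "x - cur = 0" using True assms by simp
    have e1: "c0 * real (s - h) + c1 * real h + (b - a + f0) * real (h - x)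
       = (b - a + f0 + c1) * real (s - x) + c1 * real x"
      unfolding hs using assms by (simp add: of_nat_diff algebra_simps)
    have e2: "3*eta*(c0*real(s - x) + c1*real x) + (b - a)*real(x - cur)
       = 3*eta*c0 * real (s-x) + (3*eta) * (c1 * real x)"
      unfolding xc by (simp add: algebra_simps)
    show ?thesis unfolding e1 e2 using m m2 by linarith
  next
    case False
    then have hs: "h = cur" using h \<open>c1 < c0/eta\<close> by simp
    show ?thesis
    proof (cases "x \<le> cur")
      case True
      have m: "(b - a + f0 + c1) * real (cur - x) \<le> 3*eta*c0 * real (cur-x)"
        by (rule mult_right_mono[OF key]) simp
      have m2: "c1 * real x \<le> (3*eta) * (c1 * real x)"
        using assms by (intro le_mult_self) auto
      have m3: "c0 * real (s - cur) \<le> (3*eta) * (c0 * real (s - cur))"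
        using assms by (intro le_mult_self) auto
      have xc: "x - cur = 0" using True by simp
      have e1: "c0 * real (s - h) + c1 * real h + (b - a + f0) * real (h - x)
         = c0 * real (s - cur) + (b - a + f0 + c1) * real (cur - x) + c1 * real x"
        unfolding hs using assms True by (simp add: of_nat_diff algebra_simps)
      have e2: "3*eta*(c0*real(s - x) + c1*real x) + (b - a)*real(x - cur)
         = (3*eta) * (c0 * real (s - cur)) + 3*eta*c0 * real (cur-x) + (3*eta) * (c1 * real x)"
        unfolding xc using True False assms by (simp add: of_nat_diff algebra_simps)
      show ?thesis unfolding e1 e2 using m m2 m3 by linarith
    next
      case False2: False
      have m: "(c0 - c1) * real (x - cur) \<le> (b - a) * real (x - cur)"
        using assms by (intro mult_right_mono) auto
      have m2: "c1 * real x + c0 * real (s - x) \<le> (3*eta) * (c1 * real x + c0 * real (s - x))"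
        using assms by (intro le_mult_self) auto
      have e1: "c0 * real (s - h) + c1 * real h + (b - a + f0) * real (h - x)
         = (c1 * real x + c0 * real (s - x)) + (c0 - c1) * real (x - cur)"
        unfolding hs using assms False2 False by (simp add: of_nat_diff algebra_simps)
      have e2: "3*eta*(c0*real(s - x) + c1*real x) + (b - a)*real(x - cur)
         = (3*eta) * (c1 * real x + c0 * real (s - x)) + (b - a) * real (x - cur)"
        by (simp add: algebra_simps)
      show ?thesis unfolding e1 e2 using m m2 by linarith
    qed
  qed
next
  case False
  then have hs: "h = 0" using h by simp
  have e0: "eta > 0" using assms by simp
  have ec: "c0 \<le> eta*c1" using False e0 by (simp add: field_simps)
  have m: "c0 * real x \<le> eta * c1 * real x" using ec by (intro mult_right_mono) auto
  have m2: "eta * c1 * real x \<le> 3*eta * (c1 * real x)"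
    using assms e0 by (simp add: mult_right_mono)
  have m3: "c0 * real (s - x) \<le> (3*eta) * (c0 * real (s - x))"
    using assms by (intro le_mult_self) auto
  have m4: "0 \<le> (b-a) * real (x - cur)" using assms by simp
  have e1: "c0 * real (s - h) + c1 * real h + (b - a + f0) * real (h - x)
     = c0 * real x + c0 * real (s - x)"
    unfolding hs using assms by (simp add: of_nat_diff algebra_simps)
  have e2: "3*eta*(c0*real(s - x) + c1*real x) + (b - a)*real(x - cur)
     = 3*eta * (c1 * real x) + (3*eta) * (c0 * real (s - x)) + (b - a) * real (x - cur)"
    by (simp add: algebra_simps)
  show ?thesis unfolding e1 e2 using m m2 m3 m4 by linarith
qed



definition pcost :: "real \<Rightarrow> real \<Rightarrow> nat \<Rightarrow> (nat \<Rightarrow> real) \<Rightarrow> (nat \<Rightarrow> real) \<Rightarrow> (nat \<Rightarrow> nat) \<Rightarrow> (nat \<Rightarrow> nat) \<Rightarrow> real" where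
  "pcost f0 f1 n c0 c1 s y =
     (f0 * (if (\<Sum>i<n. s i - y i) > 0 then 1 else 0) + (\<Sum>i<n. c0 i * real (s i - y i)))
   + (f1 * (if (\<Sum>i<n. y i) > 0 then 1 else 0) + (\<Sum>i<n. c1 i * real (y i)))"

lemma period_bound:
  fixes n :: nat and s cur x y :: "nat \<Rightarrow> nat" and c0 c1 :: "nat \<Rightarrow> real"
    and a b f0 f1 eta theta :: real
  assumes prm: "0 < a" "a \<le> b" "0 \<le> f1" "f1 \<le> f0" "1 \<le> eta" "b \<le> eta^2*a"
      "f0 \<le> 2*eta^2*a" "theta = f0/(2*a*eta)"
    and c: "\<forall>i<n. a \<le> c0 i \<and> c0 i \<le> b \<and> a \<le> c1 i \<and> c1 i \<le> b"
    and x: "\<forall>i<n. x i \<le> s i"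
    and y: "y = (\<lambda>i. if real (\<Sum>j<n. s j) \<le> theta \<and> (\<forall>j<n. s j \<le> cur j) then s i
                 else (if c1 i < c0 i / eta then min (s i) (cur i) else 0))"
  shows "pcost f0 f1 n c0 c1 s y + (b - a + f0) * (\<Sum>i<n. real (y i - x i))
         \<le> 5*eta*pcost f0 f1 n c0 c1 s x + (b - a + f0) * (\<Sum>i<n. real (x i - cur i))"
proof -
  define F where "F m = f0 * (if (\<Sum>i<n. s i - m i) > 0 then 1 else 0)
       + f1 * (if (\<Sum>i<n. m i) > 0 then 1 else (0::real))" for m :: "nat \<Rightarrow> nat"
  define V where "V m = (\<Sum>i<n. c0 i * real (s i - m i) + c1 i * real (m i))" for m :: "nat \<Rightarrow> nat"
  define kap where "kap = b - a + f0"
  define D where "D = (\<Sum>i<n. real (x i - cur i))"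
  define U where "U = (\<Sum>i<n. real (y i - x i))"
  have pc: "pcost f0 f1 n c0 c1 s m = F m + V m" for m
    unfolding pcost_def F_def V_def by (simp add: sum.distrib)
  have e0: "0 < eta" using prm by simp
  have kap0: "0 \<le> kap" using prm unfolding kap_def by simp
  have D0: "0 \<le> D" unfolding D_def by (simp add: sum_nonneg)
  have F0: "0 \<le> F m" for m using prm unfolding F_def by simp
  have V0: "0 \<le> V x"
  proof -
    have "0 \<le> c0 i * real (s i - x i) + c1 i * real (x i)" if "i < n" for i
    proof -
      have "0 \<le> c0 i" "0 \<le> c1 i" using c prm that by (auto intro: order_trans[of 0 a])
      then show ?thesis by simp
    qed
    then show ?thesis unfolding V_def by (intro sum_nonneg) auto
  qed
  have Vx: "a * real (\<Sum>j<n. s j) \<le> V x"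
  proof -
    have "a * real (s i) \<le> c0 i * real (s i - x i) + c1 i * real (x i)" if "i < n" for i
    proof -
      have 1: "a * real (s i - x i) \<le> c0 i * real (s i - x i)" using c that by (intro mult_right_mono) auto
      have 2: "a * real (x i) \<le> c1 i * real (x i)" using c that by (intro mult_right_mono) auto
      have "a * real (s i) = a * real (s i - x i) + a * real (x i)" using x that
        by (simp add: of_nat_diff algebra_simps)
      then show ?thesis using 1 2 by linarith
    qed
    then have "(\<Sum>i<n. a * real (s i)) \<le> V x" unfolding V_def by (intro sum_mono) auto
    then show ?thesis by (simp add: sum_distrib_left)
  qed
  have Fx_f0: "f0 \<le> F x" if "(\<Sum>i<n. s i - x i) > 0" using that prm unfolding F_def by simp
  have Fx_f1: "f1 \<le> F x" if "\<exists>i<n. 0 < s i"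
  proof (cases "(\<Sum>i<n. s i - x i) > 0")
    case True then show ?thesis using Fx_f0 prm by simp
  next
    case False
    then have "\<forall>i<n. s i - x i = 0" by simp
    with that x obtain i where i: "i < n" "0 < x i" by (metis diff_is_0_eq le_antisym)
    then have "x i \<le> (\<Sum>i<n. x i)" by (intro member_le_sum) auto
    then have "(\<Sum>i<n. x i) > 0" using i by simp
    then show ?thesis using prm unfolding F_def by simp
  qed
  show ?thesis
  proof (cases "real (\<Sum>j<n. s j) \<le> theta \<and> (\<forall>j<n. s j \<le> cur j)")
    case True
    note small = True
    then have ys: "y = s" using y by simp
    have Fs: "F s \<le> f1 * (if (\<Sum>i<n. s i) > 0 then 1 else 0)" unfolding F_def by simp
    have Vs: "V s \<le> V x + b * U"
    proof -
      have "c0 i * real (s i - s i) + c1 i * real (s i) \<le> (c0 i * real (s i - x i) + c1 i * real (x i)) + b * real (s i - x i)"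
        if "i < n" for i
      proof -
        have 1: "c1 i * real (s i - x i) \<le> b * real (s i - x i)" using c that by (intro mult_right_mono) auto
        have 2: "0 \<le> c0 i * real (s i - x i)" using c prm that by (simp add: order_trans[of 0 a])
        have "c1 i * real (s i) = c1 i * real (s i - x i) + c1 i * real (x i)" using x that
          by (simp add: of_nat_diff algebra_simps)
        then show ?thesis using 1 2 by simp
      qed
      then have "V s \<le> (\<Sum>i<n. (c0 i * real (s i - x i) + c1 i * real (x i)) + b * real (s i - x i))"
        unfolding V_def by (intro sum_mono) auto
      then show ?thesis unfolding V_def U_def ys by (simp add: sum.distrib sum_distrib_left)
    qed
    have main: "F s + V s + kap * U \<le> 5 * eta * (F x + V x)"
    proof (cases "(\<Sum>i<n. s i - x i) > 0")
      case False
      then have "\<forall>i<n. s i - x i = 0" by simp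
      then have U0: "U = 0" unfolding U_def ys by simp
      have "F s \<le> F x"
      proof (cases "\<exists>i<n. 0 < s i")
        case True
        then obtain i where i: "i < n" "0 < s i" by auto
        then have "s i \<le> (\<Sum>i<n. s i)" by (intro member_le_sum) auto
        then show ?thesis using Fs Fx_f1 True i by auto
      next
        case False then have "(\<Sum>i<n. s i) = 0" by simp
        then show ?thesis using Fs F0[of x] by simp
      qed
      moreover have "F x + V x \<le> 5 * eta * (F x + V x)"
        using F0 V0 prm by (intro le_mult_self) auto
      ultimately show ?thesis using Vs U0 by simp
    next
      case True
      have f1F: "F s \<le> F x" using Fs Fx_f0[OF True] prm by (simp split: if_splits)
      have "U \<le> real (\<Sum>j<n. s j)" unfolding U_def ys by (simp add: of_nat_sum[symmetric] sum_mono del: of_nat_sum)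
      also have "\<dots> \<le> theta" using small by simp
      finally have Ut: "U \<le> theta" .
      have U0: "0 \<le> U" unfolding U_def by (simp add: sum_nonneg)
      have "b + kap \<le> 4*eta^2*a" using prm unfolding kap_def by simp
      then have "(b + kap) * U \<le> (4*eta^2*a) * theta"
        using Ut U0 prm kap0 by (intro mult_mono) auto
      also have "\<dots> = 2 * eta * f0" using prm e0 by (simp add: power2_eq_square field_simps)
      also have "\<dots> \<le> 2 * eta * F x" using Fx_f0[OF True] e0 by simp
      finally have bk: "(b + kap) * U \<le> 2 * eta * F x" .
      have "F x + V x + 2 * eta * F x \<le> 5 * eta * (F x + V x)"
        using F0[of x] V0 prm e0 mult_right_mono[of 1 eta "F x"] mult_right_mono[of 1 eta "V x"]
        by (simp add: algebra_simps)
      moreover have "(b + kap) * U = b * U + kap * U" by (simp add: algebra_simps)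
      ultimately show ?thesis using f1F Vs bk by linarith
    qed
    have "0 \<le> kap * D" using kap0 D0 by simp
    then have "F y + V y + kap * U \<le> 5 * eta * (F x + V x) + kap * D" using main ys by simp
    then show ?thesis unfolding pc kap_def U_def D_def by simp
  next
    case False
    note nsmall = False
    then have yh: "y i = (if c1 i < c0 i / eta then min (s i) (cur i) else 0)" for i by (simp only: y if_not_P[OF nsmall] if_False)
    have ys: "y i \<le> s i" for i using yh[of i] by simp
    have items: "V y + kap * U \<le> 3 * eta * V x + (b - a) * D"
    proof -
      have "c0 i * real (s i - y i) + c1 i * real (y i) + kap * real (y i - x i)
            \<le> 3*eta*(c0 i*real(s i - x i) + c1 i*real (x i)) + (b - a)*real(x i - cur i)" if "i < n" for i
        unfolding kap_def using c x that prm by (intro item_bound[OF _ _ _ _ _ _ _ _ _ _ _ yh[of i]]) auto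
      then have "(\<Sum>i<n. c0 i * real (s i - y i) + c1 i * real (y i) + kap * real (y i - x i))
            \<le> (\<Sum>i<n. 3*eta*(c0 i*real(s i - x i) + c1 i*real (x i)) + (b - a)*real(x i - cur i))"
        by (intro sum_mono) auto
      then show ?thesis unfolding V_def U_def D_def by (simp add: sum.distrib sum_distrib_left[symmetric])
    qed
    have fy1: "f1 * (if (\<Sum>i<n. y i) > 0 then 1 else 0) \<le> F x"
    proof (cases "(\<Sum>i<n. y i) > 0")
      case True
      then obtain i where "i < n" "0 < y i" by (metis lessThan_iff not_gr0 sum_eq_0_iff finite_lessThan)
      then have "0 < s i" using ys[of i] by simp
      then show ?thesis using Fx_f1 \<open>i < n\<close> True by auto
    qed (use F0 in simp)
    have nn1: "0 \<le> 2 * eta * V x" using V0 e0 by simp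
    have nn2: "0 \<le> f0 * D" using D0 prm by simp
    have fy0': "f0 \<le> F x + 2 * eta * V x + f0 * D"
    proof (cases "(\<Sum>i<n. s i - x i) > 0")
      case True then show ?thesis using Fx_f0 nn1 nn2 by linarith
    next
      case Fa: False
      then have xs: "\<forall>i<n. x i = s i" using x by (simp add: le_antisym)
      show ?thesis
      proof (cases "real (\<Sum>j<n. s j) \<le> theta")
        case False
        have "f0 = 2 * eta * a * theta" using prm e0 by (simp add: field_simps)
        also have "\<dots> \<le> 2 * eta * (a * real (\<Sum>j<n. s j))"
        proof -
          have at: "a * theta \<le> a * real (\<Sum>j<n. s j)" using False prm by (intro mult_left_mono) auto
          have "(2 * eta) * (a * theta) \<le> (2 * eta) * (a * real (\<Sum>j<n. s j))"
            using mult_left_mono[OF at, of "2*eta"] e0 by simp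
          then show ?thesis by (simp add: algebra_simps)
        qed
        also have "\<dots> \<le> 2 * eta * V x" using Vx e0 by simp
        finally show ?thesis using F0[of x] nn2 by linarith
      next
        case True
        with nsmall obtain j where j: "j < n" "cur j < s j" by auto
        then have "1 \<le> real (x j - cur j)" using xs by simp
        also have "\<dots> \<le> D" unfolding D_def using j
          by (intro member_le_sum) auto
        finally have "f0 \<le> D * f0" using prm by (intro le_mult_self) auto
        then have "f0 \<le> f0 * D" by (simp add: mult.commute)
        then show ?thesis using F0[of x] nn1 by linarith
      qed
    qed
    have fy0: "f0 * (if (\<Sum>i<n. s i - y i) > 0 then 1 else 0) \<le> F x + 2 * eta * V x + f0 * D"
      using fy0' F0[of x] nn1 nn2 by simp
    have Fy: "F y \<le> 2 * F x + 2 * eta * V x + f0 * D"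
      using fy0 fy1 unfolding F_def by simp
    have "2 * F x + 5 * eta * V x \<le> 5 * eta * (F x + V x)"
      using F0[of x] V0 prm mult_right_mono[of 1 eta "F x"] by (simp add: algebra_simps)
    moreover have "kap * D = (b - a) * D + f0 * D" unfolding kap_def by (simp add: algebra_simps)
    ultimately have "F y + V y + kap * U \<le> 5 * eta * (F x + V x) + kap * D"
      using Fy items by linarith
    then show ?thesis unfolding pc kap_def U_def D_def by simp
  qed
qed



lemma pot_step:
  fixes A Oc cur I yv xv :: nat
  assumes "cur + A = I" "yv \<le> cur" "Oc + xv \<le> I"
  shows "real (xv - cur) + max (real (A + yv) - real (Oc + xv)) 0
         \<le> max (real A - real Oc) 0 + real (yv - xv)"
  using assms by (auto simp: rdiff max_def)

lemma inv_sum: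
  fixes yy inv :: "nat \<Rightarrow> nat" and I :: nat
  assumes "inv 0 = I" and "\<And>t. yy (Suc t) \<le> inv t" and "\<And>t. inv (Suc t) = inv t - yy (Suc t)"
  shows "inv t + (\<Sum>\<tau>\<in>{1..t}. yy \<tau>) = I"
proof (induction t)
  case 0 then show ?case using assms by simp
next
  case (Suc t) then show ?case using assms(2)[of t] assms(3)[of t] by (simp add: sum.cl_ivl_Suc)
qed

lemma potential:
  fixes yy xx inv :: "nat \<Rightarrow> nat" and I :: nat
  assumes "inv 0 = I" and "\<And>t. yy (Suc t) \<le> inv t" and "\<And>t. inv (Suc t) = inv t - yy (Suc t)"
    and "\<forall>t\<in>{1..T}. (\<Sum>\<tau>\<in>{1..t}. xx \<tau>) \<le> I"
  shows "(\<Sum>t\<in>{1..T}. real (xx t - inv (t-1))) \<le> (\<Sum>t\<in>{1..T}. real (yy t - xx t))"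
proof -
  have iv: "inv t + (\<Sum>\<tau>\<in>{1..t}. yy \<tau>) = I" for t by (rule inv_sum[OF assms(1-3)])
  have "(\<forall>t\<in>{1..T}. (\<Sum>\<tau>\<in>{1..t}. xx \<tau>) \<le> I) \<longrightarrow>
     (\<Sum>t\<in>{1..T}. real (xx t - inv (t-1)))
       + max (real (\<Sum>\<tau>\<in>{1..T}. yy \<tau>) - real (\<Sum>\<tau>\<in>{1..T}. xx \<tau>)) 0
     \<le> (\<Sum>t\<in>{1..T}. real (yy t - xx t))"
  proof (induction T)
    case 0 then show ?case by simp
  next
    case (Suc T)
    show ?case
    proof
      assume h: "\<forall>t\<in>{1..Suc T}. (\<Sum>\<tau>\<in>{1..t}. xx \<tau>) \<le> I"
      then have ih: "(\<Sum>t\<in>{1..T}. real (xx t - inv (t-1)))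
       + max (real (\<Sum>\<tau>\<in>{1..T}. yy \<tau>) - real (\<Sum>\<tau>\<in>{1..T}. xx \<tau>)) 0
       \<le> (\<Sum>t\<in>{1..T}. real (yy t - xx t))" using Suc.IH by auto
      have hx: "(\<Sum>\<tau>\<in>{1..T}. xx \<tau>) + xx (Suc T) \<le> I"
        using h[rule_format, of "Suc T"] by (simp add: sum.cl_ivl_Suc)
      have st: "real (xx (Suc T) - inv T) + max (real ((\<Sum>\<tau>\<in>{1..T}. yy \<tau>) + yy (Suc T)) - real ((\<Sum>\<tau>\<in>{1..T}. xx \<tau>) + xx (Suc T))) 0
         \<le> max (real (\<Sum>\<tau>\<in>{1..T}. yy \<tau>) - real (\<Sum>\<tau>\<in>{1..T}. xx \<tau>)) 0 + real (yy (Suc T) - xx (Suc T))"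
        by (rule pot_step[OF iv assms(2) hx])
      show "(\<Sum>t\<in>{1..Suc T}. real (xx t - inv (t-1)))
       + max (real (\<Sum>\<tau>\<in>{1..Suc T}. yy \<tau>) - real (\<Sum>\<tau>\<in>{1..Suc T}. xx \<tau>)) 0
       \<le> (\<Sum>t\<in>{1..Suc T}. real (yy t - xx t))"
        using ih st by (simp add: sum.cl_ivl_Suc)
    qed
  qed
  then show ?thesis using assms(4) by (smt (verit) max.cobounded2)
qed


lemma plan_cost_pcost:
  assumes "\<forall>t\<in>{1..T}. \<forall>i<n. m 0 t i = S t i - m 1 t i"
  shows "plan_cost f0 f1 n T c m = (\<Sum>t\<in>{1..T}. pcost f0 f1 n (c 0 t) (c 1 t) (S t) (m 1 t))"
  unfolding plan_cost_def
proof (intro sum.cong refl)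
  fix t assume t: "t \<in> {1..T}"
  have e1: "(\<Sum>i<n. m 0 t i) = (\<Sum>i<n. S t i - m 1 t i)" using assms t by (intro sum.cong) auto
  have e2: "(\<Sum>i<n. c 0 t i * real (m 0 t i)) = (\<Sum>i<n. c 0 t i * real (S t i - m 1 t i))"
    using assms t by (intro sum.cong) auto
  show "(\<Sum>k\<in>{0::nat, 1}. fixed_cost f0 f1 k * (if 0 < (\<Sum>i<n. m k t i) then 1 else 0) + (\<Sum>i<n. c k t i * real (m k t i)))
     = pcost f0 f1 n (c 0 t) (c 1 t) (S t) (m 1 t)"
    unfolding pcost_def fixed_cost_def by (simp add: e1 e2)
qed

lemma pcost_nonneg:
  assumes "0 \<le> f1" "f1 \<le> f0" "\<forall>i<n. 0 \<le> c0 i \<and> 0 \<le> c1 i"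
  shows "0 \<le> pcost f0 f1 n c0 c1 s y"
proof -
  have "0 \<le> (\<Sum>i<n. c0 i * real (s i - y i))" "0 \<le> (\<Sum>i<n. c1 i * real (y i))"
    using assms by (auto intro!: sum_nonneg)
  then show ?thesis unfolding pcost_def using assms by simp
qed

theorem theorem6:
  fixes a b f0 f1 eta theta :: real
  assumes "0 < a" and "a < b" and "0 \<le> f1" and "f1 \<le> f0"
    and "eta = sqrt (max (f0 / 2) b / a)"
    and "theta = f0 / (2 * a * eta)"
  shows "\<forall>(n::nat) (T::nat) (I0::nat \<Rightarrow> nat) (S::nat \<Rightarrow> nat \<Rightarrow> nat) (c::nat \<Rightarrow> nat \<Rightarrow> nat \<Rightarrow> real).
           (\<forall>k\<in>{0::nat,1}. \<forall>t\<in>{1..T}. \<forall>i<n. a \<le> c k t i \<and> c k t i \<le> b) \<longrightarrow>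
           osa_cost eta theta f0 f1 n T I0 S c
             \<le> (4 + sqrt 2) * sqrt (max (f0 / 2) b / a) * opt_cost f0 f1 n T I0 S c"
proof (intro allI impI)
  fix n T :: nat and I0 :: "nat \<Rightarrow> nat" and S :: "nat \<Rightarrow> nat \<Rightarrow> nat" and c :: "nat \<Rightarrow> nat \<Rightarrow> nat \<Rightarrow> real"
  assume hc: "\<forall>k\<in>{0::nat,1}. \<forall>t\<in>{1..T}. \<forall>i<n. a \<le> c k t i \<and> c k t i \<le> b"
  define R where "R = max (f0 / 2) b / a"
  have Rb: "b \<le> R * a" unfolding R_def using assms by simp
  have Rf: "f0 \<le> 2 * (R * a)" unfolding R_def using assms by simp
  have R1: "1 \<le> R" unfolding R_def using assms by (simp add: field_simps)
  have eR: "eta^2 = R" unfolding assms(5) R_def[symmetric] using R1 by simp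
  have e1: "1 \<le> eta" unfolding assms(5) R_def[symmetric] using R1 by simp
  have pb: "b \<le> eta^2 * a" "f0 \<le> 2*eta^2*a" using Rb Rf eR by auto
  define kap where "kap = b - a + f0"
  have kap0: "0 \<le> kap" unfolding kap_def using assms by simp
  define y where "y = osa_plan eta theta n I0 S c"
  define inv where "inv = osa_inv eta theta n I0 S c"
  have y0: "y 0 t i = S t i - y 1 t i" for t i unfolding y_def osa_plan_def by (simp add: Let_def)
  have y1: "y 1 t = (\<lambda>i. if real (\<Sum>j<n. S t j) \<le> theta \<and> (\<forall>j<n. S t j \<le> inv (t-1) j) then S t i
                 else (if c 1 t i < c 0 t i / eta then min (S t i) (inv (t-1) i) else 0))" for t
    unfolding y_def inv_def osa_plan_def osa_m1_def hat_m1_def by (simp add: Let_def)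
  have ALG: "osa_cost eta theta f0 f1 n T I0 S c = (\<Sum>t\<in>{1..T}. pcost f0 f1 n (c 0 t) (c 1 t) (S t) (y 1 t))"
    unfolding osa_cost_def y_def[symmetric] by (rule plan_cost_pcost) (use y0 in auto)
  have ylei: "y 1 (Suc t) i \<le> inv t i" if "i < n" for t i
    using that unfolding y1 by auto
  have invS: "inv (Suc t) i = inv t i - y 1 (Suc t) i" for t i
    unfolding inv_def y_def osa_plan_def by (simp add: Let_def)
  have inv0: "inv 0 i = I0 i" for i unfolding inv_def by simp
  have cpos: "\<forall>i<n. 0 \<le> c 0 t i \<and> 0 \<le> c 1 t i" if "t \<in> {1..T}" for t
    using hc that assms(1) by (meson insertCI order_trans less_imp_le)
  have bound: "osa_cost eta theta f0 f1 n T I0 S c \<le> 5 * eta * plan_cost f0 f1 n T c m"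
    if fm: "feasible n T I0 S m" for m
  proof -
    have m0: "\<forall>t\<in>{1..T}. \<forall>i<n. m 0 t i = S t i - m 1 t i" using fm unfolding feasible_def
      by (metis add_diff_cancel_right')
    have OPT: "plan_cost f0 f1 n T c m = (\<Sum>t\<in>{1..T}. pcost f0 f1 n (c 0 t) (c 1 t) (S t) (m 1 t))"
      by (rule plan_cost_pcost[OF m0])
    have per: "pcost f0 f1 n (c 0 t) (c 1 t) (S t) (y 1 t) + kap * (\<Sum>i<n. real (y 1 t i - m 1 t i))
         \<le> 5*eta*pcost f0 f1 n (c 0 t) (c 1 t) (S t) (m 1 t) + kap * (\<Sum>i<n. real (m 1 t i - inv (t-1) i))"
      if t: "t \<in> {1..T}" for t
      unfolding kap_def
    proof (rule period_bound[OF assms(1) _ assms(3,4) e1 pb assms(6) _ _ y1])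
      show "a \<le> b" using assms by simp
      show "\<forall>i<n. a \<le> c 0 t i \<and> c 0 t i \<le> b \<and> a \<le> c 1 t i \<and> c 1 t i \<le> b" using hc t by auto
      show "\<forall>i<n. m 1 t i \<le> S t i" using fm t unfolding feasible_def by (metis le_add2)
    qed
    have pot: "(\<Sum>t\<in>{1..T}. real (m 1 t i - inv (t-1) i)) \<le> (\<Sum>t\<in>{1..T}. real (y 1 t i - m 1 t i))"
      if i: "i < n" for i
    proof (rule potential[where I = "I0 i"])
      show "inv 0 i = I0 i" by (rule inv0)
      show "y 1 (Suc t) i \<le> inv t i" for t using ylei i .
      show "inv (Suc t) i = inv t i - y 1 (Suc t) i" for t by (rule invS)
      show "\<forall>t\<in>{1..T}. (\<Sum>\<tau>\<in>{1..t}. m 1 \<tau> i) \<le> I0 i" using fm i unfolding feasible_def by auto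
    qed
    have "(\<Sum>t\<in>{1..T}. \<Sum>i<n. real (m 1 t i - inv (t-1) i)) = (\<Sum>i<n. \<Sum>t\<in>{1..T}. real (m 1 t i - inv (t-1) i))"
      by (rule sum.swap)
    also have "\<dots> \<le> (\<Sum>i<n. \<Sum>t\<in>{1..T}. real (y 1 t i - m 1 t i))" by (rule sum_mono) (rule pot, simp)
    also have "\<dots> = (\<Sum>t\<in>{1..T}. \<Sum>i<n. real (y 1 t i - m 1 t i))" by (rule sum.swap)
    finally have DU: "(\<Sum>t\<in>{1..T}. \<Sum>i<n. real (m 1 t i - inv (t-1) i)) \<le> (\<Sum>t\<in>{1..T}. \<Sum>i<n. real (y 1 t i - m 1 t i))" .
    have "(\<Sum>t\<in>{1..T}. pcost f0 f1 n (c 0 t) (c 1 t) (S t) (y 1 t) + kap * (\<Sum>i<n. real (y 1 t i - m 1 t i)))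
       \<le> (\<Sum>t\<in>{1..T}. 5*eta*pcost f0 f1 n (c 0 t) (c 1 t) (S t) (m 1 t) + kap * (\<Sum>i<n. real (m 1 t i - inv (t-1) i)))"
      using per by (intro sum_mono) auto
    then have "osa_cost eta theta f0 f1 n T I0 S c + kap * (\<Sum>t\<in>{1..T}. \<Sum>i<n. real (y 1 t i - m 1 t i))
       \<le> 5*eta*plan_cost f0 f1 n T c m + kap * (\<Sum>t\<in>{1..T}. \<Sum>i<n. real (m 1 t i - inv (t-1) i))"
      unfolding ALG OPT by (simp add: sum.distrib sum_distrib_left)
    moreover have "kap * (\<Sum>t\<in>{1..T}. \<Sum>i<n. real (m 1 t i - inv (t-1) i))
       \<le> kap * (\<Sum>t\<in>{1..T}. \<Sum>i<n. real (y 1 t i - m 1 t i))" using DU kap0 by (rule mult_left_mono)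
    ultimately show ?thesis by linarith
  qed
  have pc0: "0 \<le> plan_cost f0 f1 n T c m" if fm: "feasible n T I0 S m" for m
  proof -
    have m0: "\<forall>t\<in>{1..T}. \<forall>i<n. m 0 t i = S t i - m 1 t i" using fm unfolding feasible_def
      by (metis add_diff_cancel_right')
    show ?thesis unfolding plan_cost_pcost[OF m0]
      by (intro sum_nonneg pcost_nonneg assms(3,4) cpos) auto
  qed
  define K where "K = (4 + sqrt 2) * eta"
  have K5: "5 * eta \<le> K" unfolding K_def using e1 by (simp add: algebra_simps)
  have K0: "0 < K" using K5 e1 by simp
  define X where "X = {plan_cost f0 f1 n T c m | m. feasible n T I0 S m}"
  have ne: "X \<noteq> {}"
  proof -
    have "feasible n T I0 S (\<lambda>k t i. if k = 0 then S t i else 0)" unfolding feasible_def by simp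
    then show ?thesis unfolding X_def by blast
  qed
  have "osa_cost eta theta f0 f1 n T I0 S c / K \<le> Inf X"
  proof (rule cInf_greatest[OF ne])
    fix z assume "z \<in> X"
    then obtain m where z: "z = plan_cost f0 f1 n T c m" and fm: "feasible n T I0 S m" unfolding X_def by blast
    have "osa_cost eta theta f0 f1 n T I0 S c \<le> 5 * eta * z" using bound[OF fm] z by simp
    also have "\<dots> \<le> K * z" using K5 pc0[OF fm] z by (intro mult_right_mono) auto
    finally show "osa_cost eta theta f0 f1 n T I0 S c / K \<le> z" using K0 by (simp add: field_simps mult.commute)
  qed
  then have "osa_cost eta theta f0 f1 n T I0 S c \<le> K * Inf X" using K0 by (simp add: field_simps mult.commute)
  then show "osa_cost eta theta f0 f1 n T I0 S c \<le> (4 + sqrt 2) * sqrt (max (f0 / 2) b / a) * opt_cost f0 f1 n T I0 S c"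
    unfolding K_def X_def opt_cost_def assms(5)[symmetric] .
qed

end
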